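(* Let $(A,\mu,\alpha,\beta)$ be a BiHom-associative algebra and $R:A\to A$ an $\alpha\beta$-Rota-Baxter operator. Let $\eta:A\to A$ be an algebra map commuting with $\alpha$, $\beta$ and $R$. Define $x\prec y=\alpha\beta(x)R(\eta(y))$ and $x\succ y=R(x)\alpha\beta\eta(y)$ for $x,y\in A$. Then $(A,\prec,\succ,\alpha^2\beta,\alpha\beta^2\eta)$ is a BiHom-dendriform algebra.
   Context: A BiHom-associative algebra $(A,\mu,\alpha,\beta)$: linear space with bilinear $\mu(x\otimes y)=xy$ and linear maps $\alpha,\beta$ with $\alpha\beta=\beta\alpha$, both multiplicative, and $\alpha(x)(yz)=(xy)\beta(z)$ for all $x,y,z$. An $\alpha\beta$-Rota-Baxter operator is a linear map $R$ commuting with $\alpha$ and $\beta$ such that $R(\alpha\beta(a))R(\alpha\beta(b))=R\big(\alpha\beta(a)R(b)+R(a)\alpha\beta(b)\big)$ for all $a,b$. A BiHom-dendriform algebra $(A,\prec,\succ,\alpha',\beta')$: bilinear $\prec,\succ$ and commuting linear maps $\alpha',\beta'$ multiplicative for both operations such that $(x\prec y)\prec\beta'(z)=\alpha'(x)\prec(y\prec z+y\succ z)$, $(x\succ y)\prec\beta'(z)=\alpha'(x)\succ(y\prec z)$, $\alpha'(x)\succ(y\succ z)=(x\prec y+x\succ y)\succ\beta'(z)$. *)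

theory Defs
  imports Main "HOL.Vector_Spaces"
begin

definition bilinear_op :: "('k::field \<Rightarrow> 'a::ab_group_add \<Rightarrow> 'a) \<Rightarrow> ('a \<Rightarrow> 'a \<Rightarrow> 'a) \<Rightarrow> bool" where
  "bilinear_op s m \<longleftrightarrow> (\<forall>x. Vector_Spaces.linear s s (m x)) \<and> (\<forall>y. Vector_Spaces.linear s s (\<lambda>x. m x y))"

definition multiplicative :: "('a \<Rightarrow> 'a \<Rightarrow> 'a) \<Rightarrow> ('a \<Rightarrow> 'a) \<Rightarrow> bool" where
  "multiplicative m f \<longleftrightarrow> (\<forall>x y. f (m x y) = m (f x) (f y))"

definition BiHom_assoc_alg ::
  "('k::field \<Rightarrow> 'a::ab_group_add \<Rightarrow> 'a) \<Rightarrow> ('a \<Rightarrow> 'a \<Rightarrow> 'a) \<Rightarrow> ('a \<Rightarrow> 'a) \<Rightarrow> ('a \<Rightarrow> 'a) \<Rightarrow> bool" where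
  "BiHom_assoc_alg s mu al be \<longleftrightarrow>
     vector_space s \<and> bilinear_op s mu \<and>
     Vector_Spaces.linear s s al \<and> Vector_Spaces.linear s s be \<and>
     al \<circ> be = be \<circ> al \<and> multiplicative mu al \<and> multiplicative mu be \<and>
     (\<forall>x y z. mu (al x) (mu y z) = mu (mu x y) (be z))"

definition alphabeta_RB_op ::
  "('k::field \<Rightarrow> 'a::ab_group_add \<Rightarrow> 'a) \<Rightarrow> ('a \<Rightarrow> 'a \<Rightarrow> 'a) \<Rightarrow> ('a \<Rightarrow> 'a) \<Rightarrow> ('a \<Rightarrow> 'a) \<Rightarrow> ('a \<Rightarrow> 'a) \<Rightarrow> bool" where
  "alphabeta_RB_op s mu al be R \<longleftrightarrow>
     Vector_Spaces.linear s s R \<and> R \<circ> al = al \<circ> R \<and> R \<circ> be = be \<circ> R \<and>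
     (\<forall>a b. mu (R (al (be a))) (R (al (be b))) =
            R (mu (al (be a)) (R b) + mu (R a) (al (be b))))"

definition algebra_map ::
  "('k::field \<Rightarrow> 'a::ab_group_add \<Rightarrow> 'a) \<Rightarrow> ('a \<Rightarrow> 'a \<Rightarrow> 'a) \<Rightarrow> ('a \<Rightarrow> 'a) \<Rightarrow> bool" where
  "algebra_map s mu f \<longleftrightarrow> Vector_Spaces.linear s s f \<and> multiplicative mu f"

definition BiHom_dendriform ::
  "('k::field \<Rightarrow> 'a::ab_group_add \<Rightarrow> 'a) \<Rightarrow> ('a \<Rightarrow> 'a \<Rightarrow> 'a) \<Rightarrow> ('a \<Rightarrow> 'a \<Rightarrow> 'a) \<Rightarrow> ('a \<Rightarrow> 'a) \<Rightarrow> ('a \<Rightarrow> 'a) \<Rightarrow> bool" where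
  "BiHom_dendriform s l r al be \<longleftrightarrow>
     vector_space s \<and> bilinear_op s l \<and> bilinear_op s r \<and>
     Vector_Spaces.linear s s al \<and> Vector_Spaces.linear s s be \<and>
     al \<circ> be = be \<circ> al \<and>
     multiplicative l al \<and> multiplicative r al \<and> multiplicative l be \<and> multiplicative r be \<and>
     (\<forall>x y z. l (l x y) (be z) = l (al x) (l y z + r y z)) \<and>
     (\<forall>x y z. l (r x y) (be z) = r (al x) (l y z)) \<and>
     (\<forall>x y z. r (al x) (r y z) = r (l x y + r x y) (be z))"

end

theory Submission
  imports Defs
begin

lemma lin_comp: "module s \<Longrightarrow> Vector_Spaces.linear s s f \<Longrightarrow> Vector_Spaces.linear s s g \<Longrightarrow> Vector_Spaces.linear s s (\<lambda>x. g (f x))"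
  using Vector_Spaces.linear_compose[of s s f s g] by (simp add: o_def)

theorem mainTheorem7:
  fixes s :: "'k::field \<Rightarrow> 'a::ab_group_add \<Rightarrow> 'a"
    and mu :: "'a \<Rightarrow> 'a \<Rightarrow> 'a" and al be R eta :: "'a \<Rightarrow> 'a"
  assumes "BiHom_assoc_alg s mu al be"
    and "alphabeta_RB_op s mu al be R"
    and "algebra_map s mu eta"
    and "eta \<circ> al = al \<circ> eta" and "eta \<circ> be = be \<circ> eta" and "eta \<circ> R = R \<circ> eta"
  shows "BiHom_dendriform s
           (\<lambda>x y. mu (al (be x)) (R (eta y)))
           (\<lambda>x y. mu (R x) (al (be (eta y))))
           (al \<circ> al \<circ> be)
           (al \<circ> be \<circ> be \<circ> eta)"
proof -
  from assms(1) have vs: "vector_space s" and bl: "bilinear_op s mu"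
    and la: "Vector_Spaces.linear s s al" and lb: "Vector_Spaces.linear s s be"
    and ab: "al \<circ> be = be \<circ> al" and ma: "multiplicative mu al" and mb: "multiplicative mu be"
    and as: "\<And>x y z. mu (al x) (mu y z) = mu (mu x y) (be z)"
    unfolding BiHom_assoc_alg_def by auto
  from assms(2) have lR: "Vector_Spaces.linear s s R" and Ra: "R \<circ> al = al \<circ> R"
    and Rb: "R \<circ> be = be \<circ> R"
    and rb: "\<And>a b. mu (R (al (be a))) (R (al (be b))) = R (mu (al (be a)) (R b) + mu (R a) (al (be b)))"
    unfolding alphabeta_RB_op_def by auto
  from assms(3) have le: "Vector_Spaces.linear s s eta" and me: "multiplicative mu eta"
    unfolding algebra_map_def by auto
  have md: "module s" using vs by (simp add: vector_space_def module_def)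
  have c1: "\<And>x. be (al x) = al (be x)" using ab by (metis comp_apply)
  have c2: "\<And>x. R (al x) = al (R x)" using Ra by (metis comp_apply)
  have c3: "\<And>x. R (be x) = be (R x)" using Rb by (metis comp_apply)
  have c4: "\<And>x. eta (al x) = al (eta x)" using assms(4) by (metis comp_apply)
  have c5: "\<And>x. eta (be x) = be (eta x)" using assms(5) by (metis comp_apply)
  have c6: "\<And>x. eta (R x) = R (eta x)" using assms(6) by (metis comp_apply)
  have m1: "\<And>x y. al (mu x y) = mu (al x) (al y)" using ma unfolding multiplicative_def by auto
  have m2: "\<And>x y. be (mu x y) = mu (be x) (be y)" using mb unfolding multiplicative_def by auto
  have m3: "\<And>x y. eta (mu x y) = mu (eta x) (eta y)" using me unfolding multiplicative_def by auto
  note C = c1 c2 c3 c4 c5 c6 m1 m2 m3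
  have bl1: "\<And>x. Vector_Spaces.linear s s (mu x)" and bl2: "\<And>y. Vector_Spaces.linear s s (\<lambda>x. mu x y)"
    using bl unfolding bilinear_op_def by auto
  have addmu: "\<And>x y z. mu x (y + z) = mu x y + mu x z"
    using bl1 by (simp add: Vector_Spaces.linear_iff module_hom_iff)
  have addmu2: "\<And>x y z. mu (y + z) x = mu y x + mu z x"
    using bl2 by (simp add: Vector_Spaces.linear_iff module_hom_iff)
  have addR: "\<And>x y. R (x + y) = R x + R y"
    using lR by (simp add: Vector_Spaces.linear_iff module_hom_iff)
  have adde: "\<And>x y. eta (x + y) = eta x + eta y"
    using le by (simp add: Vector_Spaces.linear_iff module_hom_iff)
  have adda: "\<And>x y. al (x + y) = al x + al y"
    using la by (simp add: Vector_Spaces.linear_iff module_hom_iff)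
  have addb: "\<And>x y. be (x + y) = be x + be y"
    using lb by (simp add: Vector_Spaces.linear_iff module_hom_iff)
  have lab: "Vector_Spaces.linear s s (\<lambda>x. al (be x))" by (rule lin_comp[OF md lb la])
  have ler: "Vector_Spaces.linear s s (\<lambda>x. R (eta x))" by (rule lin_comp[OF md le lR])
  have labe: "Vector_Spaces.linear s s (\<lambda>x. al (be (eta x)))" by (rule lin_comp[OF md le lab])
  have L1: "bilinear_op s (\<lambda>x y. mu (al (be x)) (R (eta y)))"
    unfolding bilinear_op_def
    using lin_comp[OF md ler bl1] lin_comp[OF md lab bl2] by blast
  have L2: "bilinear_op s (\<lambda>x y. mu (R x) (al (be (eta y))))"
    unfolding bilinear_op_def
    using lin_comp[OF md labe bl1] lin_comp[OF md lR bl2] by blast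
  have LA: "Vector_Spaces.linear s s (al \<circ> al \<circ> be)"
    using lin_comp[OF md lab la] by (simp add: o_def)
  have LB: "Vector_Spaces.linear s s (al \<circ> be \<circ> be \<circ> eta)"
    using lin_comp[OF md lin_comp[OF md le lb] lab] by (simp add: o_def)
  have comm: "(al \<circ> al \<circ> be) \<circ> (al \<circ> be \<circ> be \<circ> eta) = (al \<circ> be \<circ> be \<circ> eta) \<circ> (al \<circ> al \<circ> be)"
    by (rule ext) (simp add: C)
  have A1: "\<And>x y z. mu (al (be (mu (al (be x)) (R (eta y))))) (R (eta ((al \<circ> be \<circ> be \<circ> eta) z))) =
     mu (al (be ((al \<circ> al \<circ> be) x))) (R (eta (mu (al (be y)) (R (eta z)) + mu (R y) (al (be (eta z))))))"
  proof -
    fix x y z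
    have r: "R (eta (mu (al (be y)) (R (eta z)) + mu (R y) (al (be (eta z))))) = mu (R (al (be (eta y)))) (R (al (be (eta (eta z)))))"
      using rb[of "eta y" "eta (eta z)"] by (simp add: C adde)
    show "?thesis x y z" unfolding r
      using as[of "al (al (be (be x)))" "R (al (be (eta y)))" "R (al (be (eta (eta z))))"]
      by (simp add: C)
  qed
  have A2: "\<And>x y z. mu (al (be (mu (R x) (al (be (eta y)))))) (R (eta ((al \<circ> be \<circ> be \<circ> eta) z))) =
     mu (R ((al \<circ> al \<circ> be) x)) (al (be (eta (mu (al (be y)) (R (eta z))))))"
  proof -
    fix x y z
    show "?thesis x y z"
      using as[of "R (al (be x))" "al (al (be (be (eta y))))" "al (be (R (eta (eta z))))"]
      by (simp add: C)
  qed
  have A3: "\<And>x y z. mu (R ((al \<circ> al \<circ> be) x)) (al (be (eta (mu (R y) (al (be (eta z))))))) =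
     mu (R (mu (al (be x)) (R (eta y)) + mu (R x) (al (be (eta y))))) (al (be (eta ((al \<circ> be \<circ> be \<circ> eta) z))))"
  proof -
    fix x y z
    have r: "R (mu (al (be x)) (R (eta y)) + mu (R x) (al (be (eta y)))) = mu (R (al (be x))) (R (al (be (eta y))))"
      using rb[of x "eta y"] by simp
    show "?thesis x y z" unfolding r
      using as[of "R (al (be x))" "al (be (R (eta y)))" "al (al (be (be (eta (eta z)))))"]
      by (simp add: C)
  qed
  have M: "multiplicative (\<lambda>x y. mu (al (be x)) (R (eta y))) (al \<circ> al \<circ> be)
    \<and> multiplicative (\<lambda>x y. mu (R x) (al (be (eta y)))) (al \<circ> al \<circ> be)
    \<and> multiplicative (\<lambda>x y. mu (al (be x)) (R (eta y))) (al \<circ> be \<circ> be \<circ> eta)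
    \<and> multiplicative (\<lambda>x y. mu (R x) (al (be (eta y)))) (al \<circ> be \<circ> be \<circ> eta)"
    unfolding multiplicative_def by (simp add: C)
  show ?thesis unfolding BiHom_dendriform_def
    using vs L1 L2 LA LB comm M A1 A2 A3 by blast
qed

end
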